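(* Let $\mathbf{p}=(p^{(1)},\dots,p^{(n)})\in(0,1)^n$ with $\sum_i p^{(i)}=1$, and for distinct $i,j\in[n]$ let $f(C^{(i)},C^{(j)})=p^{(i)}/(p^{(i)}+p^{(j)})$. Let $\mathcal{C}=(c_1,\dots,c_\ell)$ be a cycle of $\ell\ge 3$ pairwise distinct indices in $[n]$. Then the situational curl $$\mathrm{curl}(\mathcal{C})=f(C^{(c_\ell)},C^{(c_1)})+\sum_{i=1}^{\ell-1}f(C^{(c_i)},C^{(c_{i+1})})$$ satisfies $1<\mathrm{curl}(\mathcal{C})<\ell-1$.
   Context: $C^{(1)},\dots,C^{(n)}$ are class labels; $\mathbf{p}$ is the categorical distribution of the label for a fixed input state $u$, and $f$ are the corresponding situational pairwise opinions. *)

theory Defs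
  imports Complex_Main
begin

definition opinion :: "(nat \<Rightarrow> real) \<Rightarrow> nat \<Rightarrow> nat \<Rightarrow> real" where
  "opinion p i j = p i / (p i + p j)"

definition curl :: "(nat \<Rightarrow> real) \<Rightarrow> nat list \<Rightarrow> real" where
  "curl p c = opinion p (c ! (length c - 1)) (c ! 0)
     + (\<Sum>i<length c - 1. opinion p (c ! i) (c ! (i + 1)))"

end

theory Submission
  imports Defs
begin

lemma curl_cyc:
  assumes "length c \<ge> 1"
  shows "curl p c = (\<Sum>i<length c. opinion p (c ! i) (c ! ((i+1) mod length c)))"
proof -
  obtain m where m: "length c = Suc m" using assms by (cases "length c") auto
  have "(\<Sum>i<Suc m. opinion p (c ! i) (c ! ((i+1) mod Suc m)))
      = (\<Sum>i<m. opinion p (c ! i) (c ! ((i+1) mod Suc m))) + opinion p (c ! m) (c ! 0)"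
    by simp
  also have "(\<Sum>i<m. opinion p (c ! i) (c ! ((i+1) mod Suc m))) = (\<Sum>i<m. opinion p (c ! i) (c ! (i+1)))"
    by (rule sum.cong) auto
  finally show ?thesis unfolding curl_def m by simp
qed

lemma shift_sum:
  fixes g :: "nat \<Rightarrow> real"
  shows "(\<Sum>i<Suc m. g ((i+1) mod Suc m)) = (\<Sum>i<Suc m. g i)"
proof -
  have "(\<Sum>i<Suc m. g ((i+1) mod Suc m)) = (\<Sum>i<m. g ((i+1) mod Suc m)) + g 0" by simp
  also have "(\<Sum>i<m. g ((i+1) mod Suc m)) = (\<Sum>i<m. g (Suc i))" by (rule sum.cong) auto
  finally show ?thesis by (metis add.commute sum.lessThan_Suc_shift)
qed

theorem lemma1:
  fixes n :: nat and p :: "nat \<Rightarrow> real" and c :: "nat list"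
  assumes "\<forall>i\<in>{1..n}. 0 < p i \<and> p i < 1"
    and "(\<Sum>i=1..n. p i) = 1"
    and "length c \<ge> 3"
    and "distinct c"
    and "set c \<subseteq> {1..n}"
  shows "1 < curl p c \<and> curl p c < real (length c) - 1"
proof -
  define l where "l = length c"
  define x where "x i = p (c ! i)" for i
  define S where "S = (\<Sum>i<l. x i)"
  have l3: "l \<ge> 3" using assms(3) l_def by simp
  obtain m where m: "l = Suc m" using l3 by (cases l) auto
  have xpos: "x i > 0" if "i < l" for i
    using assms(1,5) that unfolding x_def l_def by (meson nth_mem subsetD)
  have pair: "x i + x ((i+1) mod l) < S" if "i < l" for i
  proof -
    define a where "a = (i+1) mod l"
    define b where "b = (i+2) mod l"
    have ab: "a < l" "b < l" using l3 unfolding a_def b_def by auto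
    have d: "i \<noteq> a" "i \<noteq> b" "a \<noteq> b"
    proof -
      have "i + 2 < l \<or> i + 2 = l \<or> i + 1 = l" using that by linarith
      then consider (A) "i + 2 < l" | (B) "i + 2 = l" | (C) "i + 1 = l" by blast
      then have "i \<noteq> a \<and> i \<noteq> b \<and> a \<noteq> b"
      proof cases
        case A
        then have "a = i + 1" "b = i + 2" unfolding a_def b_def by simp_all
        then show ?thesis by simp
      next
        case B
        then have "a = i + 1" "b = 0" unfolding a_def b_def by simp_all
        then show ?thesis using B l3 by simp
      next
        case C
        then have "a = 0" "b = 1" unfolding a_def b_def using l3
          by (simp_all add: mod_Suc)
        then show ?thesis using C l3 by simp
      qed
      then show "i \<noteq> a" "i \<noteq> b" "a \<noteq> b" by simp_all
    qed
    have "(\<Sum>k\<in>{i,a,b}. x k) \<le> S" unfolding S_def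
      by (rule sum_mono2) (use that ab xpos in \<open>auto intro: less_imp_le\<close>)
    moreover have "(\<Sum>k\<in>{i,a,b}. x k) = x i + x a + x b" using d by simp
    ultimately show ?thesis using xpos[OF ab(2)] a_def by simp
  qed
  have Spos: "S > 0" unfolding S_def using xpos l3 by (intro sum_pos) (auto simp: lessThan_empty_iff)
  have op: "opinion p (c ! i) (c ! ((i+1) mod l)) = x i / (x i + x ((i+1) mod l))" for i
    unfolding opinion_def x_def by simp
  have cu: "curl p c = (\<Sum>i<l. x i / (x i + x ((i+1) mod l)))"
    using curl_cyc[of c p] l3 op unfolding l_def by simp
  have lo: "x i / S < x i / (x i + x ((i+1) mod l))" if "i < l" for i
  proof -
    have "x ((i+1) mod l) > 0" using xpos l3 by simp
    then show ?thesis using pair[OF that] xpos[OF that] by (intro divide_strict_left_mono) auto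
  qed
  have hi: "x i / (x i + x ((i+1) mod l)) < 1 - x ((i+1) mod l) / S" if "i < l" for i
  proof -
    have p1: "x ((i+1) mod l) > 0" using xpos l3 by simp
    have "x ((i+1) mod l) / S < x ((i+1) mod l) / (x i + x ((i+1) mod l))"
      using pair[OF that] xpos[OF that] p1 by (intro divide_strict_left_mono) auto
    moreover have "x i / (x i + x ((i+1) mod l)) = 1 - x ((i+1) mod l) / (x i + x ((i+1) mod l))"
      using xpos[OF that] p1 by (simp add: field_simps)
    ultimately show ?thesis by simp
  qed
  have "(\<Sum>i<l. x i / S) < curl p c"
    unfolding cu using l3 lo by (intro sum_strict_mono) (auto simp: lessThan_empty_iff)
  moreover have "(\<Sum>i<l. x i / S) = 1" using Spos unfolding S_def
    by (simp add: sum_divide_distrib[symmetric])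
  moreover have "curl p c < (\<Sum>i<l. 1 - x ((i+1) mod l) / S)"
    unfolding cu using l3 hi by (intro sum_strict_mono) (auto simp: lessThan_empty_iff)
  moreover have "(\<Sum>i<l. 1 - x ((i+1) mod l) / S) = real l - 1"
  proof -
    have "(\<Sum>i<l. x ((i+1) mod l) / S) = (\<Sum>i<l. x i / S)"
      unfolding m by (rule shift_sum)
    then show ?thesis using \<open>(\<Sum>i<l. x i / S) = 1\<close> by (simp add: sum_subtractf)
  qed
  ultimately show ?thesis unfolding l_def by linarith
qed

end
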